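(* Let $j,j',j''\in[1\mathinner{.\,.}n]$ be such that $j,j''\in\mathsf{R}$, $j'\notin\mathsf{R}$, and $j<j'<j''$. Then $\mathrm{end}(j)\le j''+\tau-1$ and $j''-j\ge2\tau$.
   Context: $T\in[0\mathinner{.\,.}\sigma)^n$ with $2\le\sigma<n^{1/7}$; $\tau=\lfloor\mu\log_\sigma n\rfloor$ for a fixed positive constant $\mu<1/6$ with $\tau\ge1$. $\mathrm{per}(S)$ is the shortest period of $S$. $\mathsf{R}=\{i\in[1\mathinner{.\,.}n-3\tau+2]:\mathrm{per}(T[i\mathinner{.\,.}i+3\tau-2])\le\tau/3\}$. For $j\in\mathsf{R}$, $\mathrm{end}(j)=\min\{j'\ge j:j'\notin\mathsf{R}\}+3\tau-2$. *)

theory Defs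
  imports Complex_Main
begin

text \<open>Strings are 1-indexed: T :: nat \<Rightarrow> nat, positions 1..n.
  A fragment T[i..k] (inclusive) has period p iff 0 < p and T l = T (l+p)
  for all i \<le> l with l + p \<le> k.\<close>

definition is_period :: "(nat \<Rightarrow> nat) \<Rightarrow> nat \<Rightarrow> nat \<Rightarrow> nat \<Rightarrow> bool" where
  "is_period T i k p \<longleftrightarrow> 0 < p \<and> (\<forall>l. i \<le> l \<and> l + p \<le> k \<longrightarrow> T l = T (l + p))"

text \<open>Shortest period of the fragment T[i..k] (for i \<le> k, p = k - i + 1 is always a period).\<close>
definition per :: "(nat \<Rightarrow> nat) \<Rightarrow> nat \<Rightarrow> nat \<Rightarrow> nat" where
  "per T i k = (LEAST p. is_period T i k p)"

definition Rset :: "(nat \<Rightarrow> nat) \<Rightarrow> nat \<Rightarrow> nat \<Rightarrow> nat set" where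
  "Rset T n \<tau> = {i. 1 \<le> i \<and> i + 3 * \<tau> \<le> n + 2 \<and>
                   real (per T i (i + 3 * \<tau> - 2)) \<le> real \<tau> / 3}"

definition run_end :: "(nat \<Rightarrow> nat) \<Rightarrow> nat \<Rightarrow> nat \<Rightarrow> nat \<Rightarrow> nat" where
  "run_end T n \<tau> j = (LEAST j'. j \<le> j' \<and> j' \<notin> Rset T n \<tau>) + 3 * \<tau> - 2"

end

theory Submission
  imports Defs
begin

lemma per_props:
  assumes "i \<le> k"
  shows "is_period T i k (per T i k)"
proof -
  have "is_period T i k (k - i + 1)" unfolding is_period_def by auto
  thus ?thesis unfolding per_def by (rule LeastI)
qed

lemma per_le: "is_period T i k p \<Longrightarrow> per T i k \<le> p"
  unfolding per_def by (rule Least_le)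

theorem lemma5p13:
  fixes T :: "nat \<Rightarrow> nat" and n \<sigma> \<tau> :: nat and \<mu> :: real
    and j j' j'' :: nat
  assumes alphabet: "\<forall>i\<in>{1..n}. T i < \<sigma>"
    and sigma_ge: "2 \<le> \<sigma>"
    and sigma_lt: "real \<sigma> < real n powr (1/7)"
    and mu_pos: "0 < \<mu>" and mu_lt: "\<mu> < 1/6"
    and tau_def: "\<tau> = nat \<lfloor>\<mu> * log (real \<sigma>) (real n)\<rfloor>"
    and tau_ge: "1 \<le> \<tau>"
    and j_range: "j \<in> {1..n}" "j' \<in> {1..n}" "j'' \<in> {1..n}"
    and jR: "j \<in> Rset T n \<tau>" and j''R: "j'' \<in> Rset T n \<tau>"
    and j'R: "j' \<notin> Rset T n \<tau>"
    and order: "j < j'" "j' < j''"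
  shows "run_end T n \<tau> j \<le> j'' + \<tau> - 1 \<and> j'' - j \<ge> 2 * \<tau>"
proof -
  define R where "R = Rset T n \<tau>"
  define e where "e = (LEAST x. j \<le> x \<and> x \<notin> R)"
  have ex: "j \<le> j' \<and> j' \<notin> R" using order j'R R_def by auto
  have eP: "j \<le> e \<and> e \<notin> R" unfolding e_def using ex by (rule LeastI)
  have ele: "e \<le> j'" unfolding e_def using ex by (rule Least_le)
  have ej: "j < e" using eP jR R_def by (metis le_neq_implies_less)
  have em1: "e - 1 \<in> R"
  proof (rule ccontr)
    assume "e - 1 \<notin> R"
    hence "j \<le> e - 1 \<and> e - 1 \<notin> R" using ej by simp
    hence "e \<le> e - 1" unfolding e_def by (rule Least_le)
    thus False using ej by simp
  qed
  have re: "run_end T n \<tau> j = e + 3 * \<tau> - 2"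
    unfolding run_end_def e_def R_def by simp
  have j''b: "j'' + 3 * \<tau> \<le> n + 2" and q3: "real (per T j'' (j'' + 3 * \<tau> - 2)) \<le> real \<tau> / 3"
    using j''R unfolding Rset_def by auto
  define q where "q = per T j'' (j'' + 3 * \<tau> - 2)"
  have qP: "is_period T j'' (j'' + 3 * \<tau> - 2) q" unfolding q_def
    using tau_ge by (intro per_props) simp
  have q3': "3 * q \<le> \<tau>" using q3 unfolding q_def by linarith
  have m1: "e - 1 + 3 * \<tau> \<le> n + 2" and p3: "real (per T (e-1) (e - 1 + 3 * \<tau> - 2)) \<le> real \<tau> / 3"
    using em1 unfolding R_def Rset_def by auto
  define p where "p = per T (e-1) (e - 1 + 3 * \<tau> - 2)"
  have pP: "is_period T (e-1) (e - 1 + 3 * \<tau> - 2) p" unfolding p_def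
    using tau_ge by (intro per_props) simp
  have p3': "3 * p \<le> \<tau>" using p3 unfolding p_def by linarith
  have epos: "1 \<le> e" using ej by simp
  have eb: "e + 3 * \<tau> \<le> n + 2" using j''b ele order by simp
  have eper: "\<not> real (per T e (e + 3 * \<tau> - 2)) \<le> real \<tau> / 3"
    using eP epos eb unfolding R_def Rset_def by auto
  have main: "e + 2 * \<tau> \<le> j'' + 1"
  proof (rule ccontr)
    assume neg: "\<not> e + 2 * \<tau> \<le> j'' + 1"
    define b where "b = e + 3 * \<tau> - 2"
    have pp: "0 < p" "\<And>l. e - 1 \<le> l \<Longrightarrow> l + p \<le> e + 3 * \<tau> - 3 \<Longrightarrow> T l = T (l + p)"
      using pP epos tau_ge unfolding is_period_def by (auto simp: algebra_simps)
    have qq: "0 < q" "\<And>l. j'' \<le> l \<Longrightarrow> l + q \<le> j'' + 3 * \<tau> - 2 \<Longrightarrow> T l = T (l + q)"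
      using qP unfolding is_period_def by auto
    have c1: "T (b - p - q) = T (b - p)"
      using qq(2)[of "b - p - q"] neg p3' q3' ele order tau_ge unfolding b_def by simp
    have c2: "T (b - p - q) = T (b - q)"
      using pp(2)[of "b - p - q"] neg p3' q3' ele order tau_ge qq(1) unfolding b_def
      by (simp add: algebra_simps)
    have c3: "T (b - q) = T b"
      using qq(2)[of "b - q"] neg p3' q3' ele order tau_ge unfolding b_def by simp
    have "is_period T e (e + 3 * \<tau> - 2) p"
      unfolding is_period_def
    proof (intro conjI allI impI)
      show "0 < p" by (rule pp(1))
      fix l assume l: "e \<le> l \<and> l + p \<le> e + 3 * \<tau> - 2"
      show "T l = T (l + p)"
      proof (cases "l + p \<le> e + 3 * \<tau> - 3")
        case True thus ?thesis using pp(2)[of l] l by (meson diff_le_self le_trans)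
      next
        case False
        hence "l + p = b" "l = b - p" using l unfolding b_def by auto
        thus ?thesis using c1 c2 c3 by simp
      qed
    qed
    hence "per T e (e + 3 * \<tau> - 2) \<le> p" by (rule per_le)
    thus False using eper p3' by linarith
  qed
  show ?thesis using main re ej tau_ge by linarith
qed

end
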